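(* Let $\psi$ be an inner function, let $a,b\in\mathbb{C}$ with $b\in\mathbb{D}$ and $|a|+|b|\le1$, and let $\varphi(z)=az\psi(z)+b$. Then the composition operator $C_\varphi$ on $H^2(\mathbb{D})$ satisfies $$\|C_\varphi\|=\sqrt{\frac{2}{1+|a|^2-|b|^2+\sqrt{(1-|a|^2+|b|^2)^2-4|b|^2}}}.$$
   Context: $\mathbb{D}$ is the open unit disc; $H^2(\mathbb{D})$ is the Hardy space of holomorphic $f(z)=\sum a_nz^n$ with $\|f\|^2=\sum|a_n|^2<\infty$. An inner function is a holomorphic map $\mathbb{D}\to\mathbb{D}$ whose radial limits have modulus $1$ a.e. on the unit circle. $C_\varphi f=f\circ\varphi$. *)

theory Defs
  imports "HOL-Complex_Analysis.Complex_Analysis"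
begin

abbreviation unit_disc :: "complex set" where
  "unit_disc \<equiv> ball 0 1"

definition taylor_coeff :: "(complex \<Rightarrow> complex) \<Rightarrow> nat \<Rightarrow> complex" where
  "taylor_coeff f n = (deriv ^^ n) f 0 / of_nat (fact n)"

definition H2 :: "(complex \<Rightarrow> complex) set" where
  "H2 = {f. f holomorphic_on unit_disc \<and> summable (\<lambda>n. (norm (taylor_coeff f n))\<^sup>2)}"

definition H2_norm :: "(complex \<Rightarrow> complex) \<Rightarrow> real" where
  "H2_norm f = sqrt (\<Sum>n. (norm (taylor_coeff f n))\<^sup>2)"

definition inner_function :: "(complex \<Rightarrow> complex) \<Rightarrow> bool" where
  "inner_function \<psi> \<longleftrightarrow>
     \<psi> holomorphic_on unit_disc \<and> \<psi> ` unit_disc \<subseteq> unit_disc \<and>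
     (AE t in lebesgue. t \<in> {0..2*pi} \<longrightarrow>
        (\<exists>L. norm L = 1 \<and> ((\<lambda>r. \<psi> (complex_of_real r * cis t)) \<longlongrightarrow> L) (at_left 1)))"

definition comp_op :: "(complex \<Rightarrow> complex) \<Rightarrow> (complex \<Rightarrow> complex) \<Rightarrow> (complex \<Rightarrow> complex)" where
  "comp_op \<phi> f = f \<circ> \<phi>"

definition comp_op_norm :: "(complex \<Rightarrow> complex) \<Rightarrow> real" where
  "comp_op_norm \<phi> = (SUP f \<in> {f \<in> H2. H2_norm f \<le> 1}. H2_norm (comp_op \<phi> f))"

end

theory Submission
  imports Defs
begin

lemma circ_norm[simp]: "r \<ge> 0 \<Longrightarrow> cmod (circlepath 0 r s) = r"
  by (simp add: circlepath norm_mult)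

lemma cnj_mult_aux: "cnj z * complex_of_real t * z = complex_of_real ((cmod z)^2 * t)"
proof -
  have e: "complex_of_real ((cmod z)^2) = z * cnj z" by (rule complex_norm_square)
  have "cnj z * complex_of_real t * z = (z * cnj z) * complex_of_real t" by (simp only: mult_ac)
  also have "\<dots> = complex_of_real ((cmod z)^2) * complex_of_real t" by (simp only: e)
  also have "\<dots> = complex_of_real ((cmod z)^2 * t)" by (simp only: of_real_mult)
  finally show ?thesis .
qed

lemma coef_integral:
  assumes hol: "f holomorphic_on ball 0 1" and r: "0 < r" "r < 1"
  shows "((\<lambda>s. f (circlepath 0 r s) / (circlepath 0 r s)^k) has_integral taylor_coeff f k) {0..1}"
proof -
  have c: "continuous_on (cball 0 r) f"
    by (rule holomorphic_on_imp_continuous_on, rule holomorphic_on_subset[OF hol]) (use r in auto)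
  have h: "f holomorphic_on ball 0 r"
    by (rule holomorphic_on_subset[OF hol]) (use r in auto)
  have "((\<lambda>u. f u / (u-0) ^ (Suc k)) has_contour_integral ((2 * pi * \<i>) / (fact k) * (deriv ^^ k) f 0)) (circlepath 0 r)"
    by (rule Cauchy_has_contour_integral_higher_derivative_circlepath[OF c h]) (use r in auto)
  then have "((\<lambda>x. f (circlepath 0 r x) / (circlepath 0 r x) ^ Suc k * vector_derivative (circlepath 0 r) (at x within {0..1}))
     has_integral ((2 * pi * \<i>) / (fact k) * (deriv ^^ k) f 0)) {0..1}"
    by (simp add: has_contour_integral_def)
  then have "((\<lambda>x. (2 * pi * \<i>) * (f (circlepath 0 r x) / (circlepath 0 r x) ^ k))
     has_integral ((2 * pi * \<i>) / (fact k) * (deriv ^^ k) f 0)) {0..1}"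
  proof (rule has_integral_eq[rotated])
    fix x :: real assume x: "x \<in> {0..1}"
    have nz: "circlepath 0 r x \<noteq> 0" using r by (auto simp: circlepath)
    show "f (circlepath 0 r x) / (circlepath 0 r x) ^ Suc k * vector_derivative (circlepath 0 r) (at x within {0..1})
       = (2 * pi * \<i>) * (f (circlepath 0 r x) / (circlepath 0 r x) ^ k)" (is ?g)
    proof -
      have vd: "vector_derivative (circlepath 0 r) (at x within {0..1}) = 2 * pi * \<i> * circlepath 0 r x"
        using x by (simp add: vector_derivative_circlepath01) (simp add: circlepath)
      show ?thesis using nz by (simp add: vd field_simps)
    qed
  qed
  from has_integral_mult_right[OF this, of "1/(2*pi*\<i>)"]
  show ?thesis by (simp add: taylor_coeff_def field_simps)
qed

lemma ps_sums:
  assumes hol: "f holomorphic_on ball 0 1" and z: "norm z < 1"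
  shows "(\<lambda>n. taylor_coeff f n * z^n) sums f z"
  using holomorphic_power_series[OF hol, of z] z by (simp add: taylor_coeff_def)

lemma ps_conv:
  assumes hol: "f holomorphic_on ball 0 1"
  shows "conv_radius (taylor_coeff f) \<ge> 1"
proof (rule conv_radius_geI_ex')
  fix r :: real assume "0 < r" "ereal r < 1"
  then show "summable (\<lambda>n. taylor_coeff f n * complex_of_real r ^ n)"
    using ps_sums[OF hol, of "of_real r"] by (auto simp: sums_iff)
qed

lemma ps_abs:
  fixes z :: complex
  assumes hol: "f holomorphic_on ball 0 1" and z: "norm z < 1"
  shows "summable (\<lambda>n. norm (taylor_coeff f n) * norm z ^ n)"
proof -
  have z1: "ereal (norm z) < 1" using z by simp
  have lt: "ereal (norm z) < conv_radius (taylor_coeff f)"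
    using z1 ps_conv[OF hol] by (rule order_less_le_trans)
  have "summable (\<lambda>n. norm (taylor_coeff f n * z ^ n))"
    by (rule abs_summable_in_conv_radius) (rule lt)
  then show ?thesis by (simp add: norm_mult norm_power)
qed

lemma parseval:
  assumes hol: "f holomorphic_on ball 0 1" and r: "0 < r" "r < 1"
  shows "summable (\<lambda>n. (cmod (taylor_coeff f n))^2 * r^(2*n))"
    "((\<lambda>s. (cmod (f (circlepath 0 r s)))^2) has_integral (\<Sum>n. (cmod (taylor_coeff f n))^2 * r^(2*n))) {0..1}"
proof -
  define c where "c = taylor_coeff f"
  define \<gamma> where "\<gamma> = circlepath 0 r"
  define A where "A = (\<Sum>n. cmod (c n) * r^n)"
  have g: "cmod (\<gamma> s) = r" for s using r by (simp add: \<gamma>_def)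
  have gin: "norm (\<gamma> s) < 1" for s using g r by simp
  have sA: "summable (\<lambda>n. cmod (c n) * r^n)"
    using ps_abs[OF hol, of "complex_of_real r"] r by (simp add: c_def)
  have cA: "cmod (c n) * r^n \<le> A" for n
    unfolding A_def by (rule sum_le_suminf[OF sA, of "{n}", simplified]) (use r in auto)
  have A0: "0 \<le> A" using cA[of 0] norm_ge_zero[of "c 0"] by (simp del: norm_ge_zero)
  show sm: "summable (\<lambda>n. (cmod (c n))^2 * r^(2*n))"
  proof (rule summable_comparison_test'[OF summable_mult[OF sA, of A]])
    fix n :: nat
    have "(cmod (c n))^2 * r^(2*n) = (cmod (c n) * r^n) * (cmod (c n) * r^n)"
      by (simp add: power2_eq_square power_mult_distrib power_mult mult_ac)
    also have "\<dots> \<le> A * (cmod (c n) * r^n)"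
      by (rule mult_right_mono[OF cA]) (use r in auto)
    finally show "norm ((cmod (c n))^2 * r^(2*n)) \<le> A * (cmod (c n) * r^n)" by simp
  qed
  have fs: "(\<lambda>n. c n * \<gamma> s ^ n) sums f (\<gamma> s)" for s
    unfolding c_def by (rule ps_sums[OF hol gin])
  have fb: "cmod (f (\<gamma> s)) \<le> A" for s
  proof -
    have "summable (\<lambda>n. norm (c n * \<gamma> s ^ n))"
      using sA by (simp add: norm_mult norm_power g)
    from summable_norm[OF this] fs[of s] show ?thesis
      by (simp add: sums_iff A_def norm_mult norm_power g)
  qed
  define G where "G = (\<lambda>N s. f (\<gamma> s) * cnj (\<Sum>n<N. c n * \<gamma> s ^ n))"
  have Gi: "(G N has_integral (of_real (\<Sum>n<N. (cmod (c n))^2 * r^(2*n)))) {0..1}" for N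
  proof -
    have e: "G N s = (\<Sum>n<N. (cnj (c n) * r^(2*n)) * (f (\<gamma> s) / \<gamma> s ^ n))" for s
    proof -
      have "cnj (\<gamma> s ^ n) = r^(2*n) / \<gamma> s ^ n" for n
      proof -
        have nz: "\<gamma> s \<noteq> 0" using g[of s] r by auto
        have "cnj (\<gamma> s) * \<gamma> s = of_real (r^2)"
          using g by (metis complex_norm_square mult.commute)
        then have "cnj (\<gamma> s) = r^2 / \<gamma> s" using nz by (simp add: field_simps)
        then show ?thesis by (simp add: power_divide power_mult)
      qed
      then show ?thesis unfolding G_def by (simp add: sum_distrib_left field_simps)
    qed
    have "((\<lambda>s. \<Sum>n<N. (cnj (c n) * r^(2*n)) * (f (\<gamma> s) / \<gamma> s ^ n)) has_integral
        (\<Sum>n<N. (cnj (c n) * r^(2*n)) * c n)) {0..1}"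
      by (intro has_integral_sum has_integral_mult_right) (auto simp: \<gamma>_def c_def intro!: coef_integral[OF hol r])
    moreover have "(\<Sum>n<N. (cnj (c n) * r^(2*n)) * c n) = of_real (\<Sum>n<N. (cmod (c n))^2 * r^(2*n))"
      by (simp only: of_real_sum, intro sum.cong refl) (simp only: cnj_mult_aux of_real_power[symmetric])
    moreover have eG: "G N = (\<lambda>s. \<Sum>n<N. (cnj (c n) * r^(2*n)) * (f (\<gamma> s) / \<gamma> s ^ n))"
      by (rule ext, rule e)
    ultimately show ?thesis unfolding eG by simp
  qed
  have lim: "\<forall>s\<in>{0..1}. (\<lambda>N. G N s) \<longlonglongrightarrow> of_real ((cmod (f (\<gamma> s)))^2)"
  proof
    fix s
    have "(\<lambda>N. \<Sum>n<N. c n * \<gamma> s ^ n) \<longlonglongrightarrow> f (\<gamma> s)"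
      using fs[of s] by (simp add: sums_def)
    then have "(\<lambda>N. G N s) \<longlonglongrightarrow> f (\<gamma> s) * cnj (f (\<gamma> s))"
      unfolding G_def by (intro tendsto_intros)
    then show "(\<lambda>N. G N s) \<longlonglongrightarrow> of_real ((cmod (f (\<gamma> s)))^2)"
      by (simp only: complex_norm_square)
  qed
  have bd: "\<forall>s\<in>{0..1}. norm (G N s) \<le> A * A" for N
  proof
    fix s
    have "norm (\<Sum>n<N. c n * \<gamma> s ^ n) \<le> (\<Sum>n<N. cmod (c n) * r^n)"
      by (rule order_trans[OF norm_sum]) (simp add: norm_mult norm_power g)
    also have "\<dots> \<le> A" unfolding A_def
      by (rule sum_le_suminf[OF sA]) (use r in auto)
    finally have "norm (\<Sum>n<N. c n * \<gamma> s ^ n) \<le> A" .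
    then show "norm (G N s) \<le> A * A" unfolding G_def norm_mult complex_mod_cnj
      by (intro mult_mono fb) (auto simp: A0)
  qed
  have "((\<lambda>s. of_real ((cmod (f (\<gamma> s)))^2) :: complex) has_integral of_real (\<Sum>n. (cmod (c n))^2 * r^(2*n))) {0..1}"
  proof (rule has_integral_dominated_convergence[OF Gi _ bd lim])
    show "(\<lambda>s::real. A * A) integrable_on {0..1}" by (rule Henstock_Kurzweil_Integration.integrable_const_ivl)
    show "(\<lambda>N. complex_of_real (\<Sum>n<N. (cmod (c n))\<^sup>2 * r ^ (2 * n))) \<longlonglongrightarrow> of_real (\<Sum>n. (cmod (c n))^2 * r^(2*n))"
      by (intro tendsto_intros summable_LIMSEQ sm)
  qed
  from has_integral_linear[OF this bounded_linear_Re]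
  show "((\<lambda>s. (cmod (f (circlepath 0 r s)))^2) has_integral (\<Sum>n. (cmod (taylor_coeff f n))^2 * r^(2*n))) {0..1}"
    by (simp add: o_def \<gamma>_def c_def)
qed

definition M2 :: "(complex \<Rightarrow> complex) \<Rightarrow> real \<Rightarrow> real" where
  "M2 h r = integral {0..1} (\<lambda>s. (cmod (h (circlepath 0 r s)))^2)"

lemma M2_eq:
  assumes hol: "f holomorphic_on ball 0 1" and r: "0 < r" "r < 1"
  shows "M2 f r = (\<Sum>n. (cmod (taylor_coeff f n))^2 * r^(2*n))"
  unfolding M2_def using parseval(2)[OF hol r] by (rule integral_unique)

lemma H2_norm_sq:
  assumes "f \<in> H2"
  shows "(H2_norm f)^2 = (\<Sum>n. (cmod (taylor_coeff f n))^2)"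
  unfolding H2_norm_def by (rule real_sqrt_pow2, rule suminf_nonneg) (use assms in \<open>auto simp: H2_def\<close>)

lemma M2_le_H2:
  assumes f: "f \<in> H2" and r: "0 < r" "r < 1"
  shows "M2 f r \<le> (H2_norm f)^2"
proof -
  have hol: "f holomorphic_on ball 0 1" and sm: "summable (\<lambda>n. (cmod (taylor_coeff f n))^2)"
    using f by (auto simp: H2_def)
  have "M2 f r = (\<Sum>n. (cmod (taylor_coeff f n))^2 * r^(2*n))" by (rule M2_eq[OF hol r])
  also have "\<dots> \<le> (\<Sum>n. (cmod (taylor_coeff f n))^2)"
  proof (rule suminf_le[OF _ parseval(1)[OF hol r] sm])
    fix n
    have "r^(2*n) \<le> 1" using r by (simp add: power_le_one)
    then show "(cmod (taylor_coeff f n))^2 * r^(2*n) \<le> (cmod (taylor_coeff f n))^2"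
      by (simp add: mult_left_le)
  qed
  finally show ?thesis using H2_norm_sq[OF f] by simp
qed

lemma H2_of_M2:
  assumes hol: "f holomorphic_on ball 0 1" and bd: "\<And>r. 0 < r \<Longrightarrow> r < 1 \<Longrightarrow> M2 f r \<le> C"
  shows "f \<in> H2" "(H2_norm f)^2 \<le> C"
proof -
  define c where "c n = (cmod (taylor_coeff f n))^2" for n
  have part: "(\<Sum>n<N. c n) \<le> C" for N
  proof -
    have lim: "((\<lambda>r. \<Sum>n<N. c n * r^(2*n)) \<longlongrightarrow> (\<Sum>n<N. c n * 1^(2*n))) (at_left (1::real))"
      by (intro tendsto_intros)
    have ev: "eventually (\<lambda>r. (\<Sum>n<N. c n * r^(2*n)) \<le> C) (at_left (1::real))"
    proof (rule eventually_mono[OF eventually_at_left_real[of 0 1]])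
      fix r :: real assume "r \<in> {0<..<1}"
      then have r: "0 < r" "r < 1" by auto
      have "(\<Sum>n<N. c n * r^(2*n)) \<le> (\<Sum>n. c n * r^(2*n))"
        by (rule sum_le_suminf) (use parseval(1)[OF hol r] in \<open>auto simp: c_def\<close>)
      also have "\<dots> = M2 f r" using M2_eq[OF hol r] by (simp add: c_def)
      also have "\<dots> \<le> C" by (rule bd[OF r])
      finally show "(\<Sum>n<N. c n * r^(2*n)) \<le> C" .
    qed (simp)
    have "(\<Sum>n<N. c n * 1^(2*n)) \<le> C"
      by (rule tendsto_le[OF _ tendsto_const lim ev]) simp
    then show ?thesis by simp
  qed
  have sm: "summable c"
    by (rule summableI_nonneg_bounded[OF _ part]) (simp add: c_def)
  then show "f \<in> H2" using hol unfolding H2_def c_def[abs_def] by simp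
  have "(\<Sum>n. c n) \<le> C" by (rule suminf_le_const[OF sm part])
  then show "(H2_norm f)^2 \<le> C" using H2_norm_sq[OF \<open>f \<in> H2\<close>] by (simp add: c_def)
qed

lemma M2_integral:
  assumes hol: "f holomorphic_on ball 0 1" and r: "0 < r" "r < 1"
  shows "((\<lambda>s. (cmod (f (circlepath 0 r s)))^2) has_integral M2 f r) {0..1}"
  using parseval(2)[OF hol r] M2_eq[OF hol r] by simp

lemma taylor_coeff_add_const:
  assumes hol: "h holomorphic_on ball 0 1"
  shows "taylor_coeff (\<lambda>z. d + h z) n = (if n = 0 then d else 0) + taylor_coeff h n"
proof -
  have "(deriv ^^ n) (\<lambda>z. d + h z) 0 = (deriv ^^ n) (\<lambda>z. d) 0 + (deriv ^^ n) h 0"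
    by (rule higher_deriv_add[OF _ hol]) auto
  then show ?thesis by (simp add: taylor_coeff_def add_divide_distrib)
qed

lemma M2_add_const:
  assumes hol: "h holomorphic_on ball 0 1" and h0: "h 0 = 0" and r: "0 < r" "r < 1"
  shows "M2 (\<lambda>z. d + h z) r = (cmod d)^2 + M2 h r"
proof -
  have hol2: "(\<lambda>z. d + h z) holomorphic_on ball 0 1" by (intro holomorphic_intros hol)
  have t0: "taylor_coeff h 0 = 0" using h0 by (simp add: taylor_coeff_def)
  have e: "(cmod (taylor_coeff (\<lambda>z. d + h z) n))^2 * r^(2*n) =
      (if n = 0 then (cmod d)^2 else 0) + (cmod (taylor_coeff h n))^2 * r^(2*n)" for n
    using t0 by (cases "n = 0") (auto simp: taylor_coeff_add_const[OF hol])
  have s1: "summable (\<lambda>n. (cmod (taylor_coeff h n))^2 * r^(2*n))" by (rule parseval(1)[OF hol r])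
  have s2: "(\<lambda>n. if n = 0 then (cmod d)^2 else 0) sums (cmod d)^2"
    using sums_single[of 0 "\<lambda>_. (cmod d)^2"] by simp
  have "M2 (\<lambda>z. d + h z) r = (\<Sum>n. (if n = 0 then (cmod d)^2 else 0) + (cmod (taylor_coeff h n))^2 * r^(2*n))"
    using M2_eq[OF hol2 r] e by simp
  also have "\<dots> = (cmod d)^2 + (\<Sum>n. (cmod (taylor_coeff h n))^2 * r^(2*n))"
    using sums_unique[OF sums_add[OF s2 summable_sums[OF s1]]] by simp
  finally show ?thesis using M2_eq[OF hol r] by simp
qed

lemma littlewood_poly:
  assumes u: "u holomorphic_on ball 0 1" and ub: "\<And>z. norm z < 1 \<Longrightarrow> norm (u z) \<le> norm z"
    and r: "0 < r" "r < 1"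
  shows "M2 (\<lambda>z. \<Sum>n<N. d n * (u z)^n) r \<le> (\<Sum>n<N. (cmod (d n))^2)"
proof (induction N arbitrary: d)
  case 0
  show ?case by (simp add: M2_def)
next
  case (Suc N)
  define Q where "Q = (\<lambda>z. \<Sum>n<N. d (Suc n) * (u z)^n)"
  have holQ: "Q holomorphic_on ball 0 1" unfolding Q_def by (intro holomorphic_intros u)
  have holuQ: "(\<lambda>z. u z * Q z) holomorphic_on ball 0 1" by (intro holomorphic_intros u holQ)
  have u0: "u 0 = 0" using ub[of 0] by simp
  have e: "(\<lambda>z. \<Sum>n<Suc N. d n * (u z)^n) = (\<lambda>z. d 0 + u z * Q z)"
    by (rule ext) (simp only: sum.lessThan_Suc_shift Q_def, simp add: sum_distrib_left mult_ac)
  have "M2 (\<lambda>z. \<Sum>n<Suc N. d n * (u z)^n) r = (cmod (d 0))^2 + M2 (\<lambda>z. u z * Q z) r"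
    unfolding e by (rule M2_add_const[OF holuQ _ r]) (simp add: u0)
  also have "M2 (\<lambda>z. u z * Q z) r \<le> M2 Q r"
    unfolding M2_def
  proof (rule integral_le[OF has_integral_integrable[OF M2_integral[OF holuQ r]] has_integral_integrable[OF M2_integral[OF holQ r]]])
    fix s :: real assume "s \<in> {0..1}"
    have "cmod (u (circlepath 0 r s)) \<le> 1"
      using ub[of "circlepath 0 r s"] r by simp
    then show "(cmod (u (circlepath 0 r s) * Q (circlepath 0 r s)))^2 \<le> (cmod (Q (circlepath 0 r s)))^2"
      by (simp add: norm_mult power_mult_distrib mult_left_le_one_le power_le_one)
  qed
  also have "M2 Q r \<le> (\<Sum>n<N. (cmod (d (Suc n)))^2)"
    unfolding Q_def by (rule Suc.IH)
  finally show ?case by (simp only: sum.lessThan_Suc_shift)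
qed

lemma littlewood:
  assumes F: "F \<in> H2" and u: "u holomorphic_on ball 0 1" and ub: "\<And>z. norm z < 1 \<Longrightarrow> norm (u z) \<le> norm z"
    and r: "0 < r" "r < 1"
  shows "M2 (\<lambda>z. F (u z)) r \<le> (H2_norm F)^2"
proof -
  have holF: "F holomorphic_on ball 0 1" and smF: "summable (\<lambda>n. (cmod (taylor_coeff F n))^2)"
    using F by (auto simp: H2_def)
  define d where "d = taylor_coeff F"
  define \<gamma> where "\<gamma> = circlepath 0 r"
  define P where "P = (\<lambda>N z. \<Sum>n<N. d n * (u z)^n)"
  have uin: "norm (u (\<gamma> s)) \<le> r" for s using ub[of "\<gamma> s"] r by (simp add: \<gamma>_def)
  have holP: "P N holomorphic_on ball 0 1" for N unfolding P_def by (intro holomorphic_intros u)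
  have uball: "u ` ball 0 1 \<subseteq> ball 0 1" using ub by force
  have holFu: "(\<lambda>z. F (u z)) holomorphic_on ball 0 1"
    using holomorphic_on_compose_gen[OF u holF uball] by (simp add: o_def)
  define A where "A = (\<Sum>n. cmod (d n) * r^n)"
  have sA: "summable (\<lambda>n. cmod (d n) * r^n)"
    using ps_abs[OF holF, of "complex_of_real r"] r by (simp add: d_def)
  have lim: "\<forall>s\<in>{0..1}. (\<lambda>N. (cmod (P N (\<gamma> s)))^2) \<longlonglongrightarrow> (cmod (F (u (\<gamma> s))))^2"
  proof
    fix s
    have "norm (u (\<gamma> s)) < 1" using uin[of s] r by simp
    from ps_sums[OF holF this] have "(\<lambda>N. P N (\<gamma> s)) \<longlonglongrightarrow> F (u (\<gamma> s))"
      by (simp add: sums_def P_def d_def)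
    then show "(\<lambda>N. (cmod (P N (\<gamma> s)))^2) \<longlonglongrightarrow> (cmod (F (u (\<gamma> s))))^2"
      by (intro tendsto_intros)
  qed
  have bd: "\<forall>s\<in>{0..1}. norm ((cmod (P N (\<gamma> s)))^2) \<le> A^2" for N
  proof
    fix s
    have "cmod (P N (\<gamma> s)) \<le> (\<Sum>n<N. cmod (d n) * r^n)"
      unfolding P_def by (rule order_trans[OF norm_sum]) (auto intro!: sum_mono mult_left_mono power_mono uin simp: norm_mult norm_power)
    also have "\<dots> \<le> A" unfolding A_def by (rule sum_le_suminf[OF sA]) (use r in auto)
    finally show "norm ((cmod (P N (\<gamma> s)))^2) \<le> A^2" by (simp add: power_mono)
  qed
  have "(\<lambda>N. integral {0..1} (\<lambda>s. (cmod (P N (\<gamma> s)))^2)) \<longlonglongrightarrow> integral {0..1} (\<lambda>s. (cmod (F (u (\<gamma> s))))^2)"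
    using lim bd
    by (intro dominated_convergence(2)[where h="\<lambda>_. A^2"])
       (auto simp: \<gamma>_def intro: has_integral_integrable[OF M2_integral[OF holP r]])
  then have "(\<lambda>N. M2 (P N) r) \<longlonglongrightarrow> M2 (\<lambda>z. F (u z)) r" by (simp add: M2_def \<gamma>_def)
  moreover have "M2 (P N) r \<le> (H2_norm F)^2" for N
  proof -
    have "M2 (P N) r \<le> (\<Sum>n<N. (cmod (d n))^2)" unfolding P_def by (rule littlewood_poly[OF u ub r])
    also have "\<dots> \<le> (\<Sum>n. (cmod (d n))^2)" by (rule sum_le_suminf) (use smF in \<open>auto simp: d_def\<close>)
    finally show ?thesis using H2_norm_sq[OF F] by (simp add: d_def)
  qed
  ultimately show ?thesis by (intro LIMSEQ_le_const2) auto
qed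

lemma deriv_taylor:
  assumes hol: "f holomorphic_on ball 0 1" and b: "norm b < 1"
  shows "(\<lambda>j. of_nat ((j+n) choose n) * taylor_coeff f (j+n) * b^j) sums ((deriv^^n) f b / fact n)"
proof -
  have holg: "(deriv^^n) f holomorphic_on ball 0 1" by (rule holomorphic_higher_deriv[OF hol]) auto
  have "(\<lambda>j. (deriv ^^ j) ((deriv^^n) f) 0 / fact j * (b - 0)^j) sums (deriv^^n) f b"
    by (rule holomorphic_power_series[OF holg]) (use b in auto)
  then have "(\<lambda>j. (deriv ^^ j) ((deriv^^n) f) 0 / fact j * b^j / fact n) sums ((deriv^^n) f b / fact n)"
    by (intro sums_divide) simp
  moreover have "(deriv ^^ j) ((deriv^^n) f) 0 / fact j * b^j / fact n = of_nat ((j+n) choose n) * taylor_coeff f (j+n) * b^j" for j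
  proof -
    have "(deriv ^^ j) ((deriv^^n) f) = (deriv ^^ (j+n)) f" by (simp add: funpow_add)
    moreover have "(of_nat ((j+n) choose n) :: complex) = fact (j+n) / (fact n * fact j)"
      using binomial_fact[of n "j+n"] by simp
    ultimately show ?thesis by (simp add: taylor_coeff_def field_simps)
  qed
  ultimately show ?thesis by simp
qed

lemma taylor_coeff_affine:
  assumes hol: "f holomorphic_on ball 0 1" and ab: "\<And>w. norm w < 1 \<Longrightarrow> norm (a*w + b) < 1"
  shows "taylor_coeff (\<lambda>z. f (a*z + b)) n = a^n * ((deriv^^n) f b / fact n)"
proof -
  have "(deriv ^^ n) (\<lambda>w. f (a*w + b)) 0 = a^n * (deriv ^^ n) f (a*0 + b)"
    by (rule higher_deriv_compose_linear'[where S="ball 0 1", OF hol open_ball open_ball]) (use ab in auto)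
  then show ?thesis by (simp add: taylor_coeff_def)
qed

lemma kernel_higher_deriv:
  fixes e :: complex
  assumes "z \<in> ball 0 1" "norm e \<le> 1"
  shows "(deriv ^^ n) (\<lambda>w. 1 / (1 - e * w)) z = fact n * e^n / (1 - e * z)^(Suc n)"
  using assms(1)
proof (induction n arbitrary: z)
  case 0 then show ?case by simp
next
  case (Suc n z)
  have nz: "1 - e * w \<noteq> 0" if "w \<in> ball 0 1" for w
  proof
    assume "1 - e * w = 0"
    then have "norm (e * w) = 1" by (metis eq_iff_diff_eq_0 norm_one)
    moreover have "norm (e * w) < 1"
    proof -
      have "norm e * norm w \<le> 1 * norm w" by (rule mult_right_mono) (use assms(2) in auto)
      then show ?thesis using that by (simp add: norm_mult)
    qed
    ultimately show False by simp
  qed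
  have ev: "eventually (\<lambda>w. (deriv ^^ n) (\<lambda>w. 1 / (1 - e * w)) w = fact n * e^n / (1 - e * w)^(Suc n)) (nhds z)"
  proof (rule eventually_mono[OF eventually_nhds_in_open[of "ball 0 1" z]])
    fix w :: complex assume "w \<in> ball 0 1"
    then show "(deriv ^^ n) (\<lambda>w. 1 / (1 - e * w)) w = fact n * e^n / (1 - e * w)^(Suc n)"
      by (rule Suc.IH)
  qed (use Suc.prems in auto)
  have "deriv ((deriv ^^ n) (\<lambda>w. 1 / (1 - e * w))) z = deriv (\<lambda>w. fact n * e^n / (1 - e * w)^(Suc n)) z"
    by (rule deriv_cong_ev[OF ev refl])
  also have "\<dots> = fact (Suc n) * e^(Suc n) / (1 - e * z)^(Suc (Suc n))"
  proof (rule DERIV_imp_deriv)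
    show "((\<lambda>w. fact n * e^n / (1 - e * w)^(Suc n)) has_field_derivative fact (Suc n) * e^(Suc n) / (1 - e * z)^(Suc (Suc n))) (at z)"
    proof -
      define G where "G = 1 - e * z"
      have G: "G \<noteq> 0" using nz[OF Suc.prems] by (simp add: G_def)
      have d1: "((\<lambda>w. (1 - e*w)^(Suc n)) has_field_derivative (of_nat (Suc n) * G^n * (-e))) (at z)"
        unfolding G_def by (rule derivative_eq_intros refl)+ simp
      have d2: "((\<lambda>w. inverse ((1 - e*w)^(Suc n))) has_field_derivative - ((of_nat (Suc n) * G^n * (-e)) * inverse ((G^(Suc n))^2))) (at z)"
      proof -
        have "(1 - e*z)^(Suc n) \<noteq> 0" using G by (simp add: G_def)
        from DERIV_inverse_fun[OF d1 this] show ?thesis by (simp only: G_def power2_eq_square power_Suc power_0 mult_1_right)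
      qed
      have d3: "((\<lambda>w. fact n * e^n * inverse ((1 - e*w)^(Suc n))) has_field_derivative fact n * e^n * (- ((of_nat (Suc n) * G^n * (-e)) * inverse ((G^(Suc n))^2)))) (at z)"
        by (rule DERIV_cmult[OF d2])
      have eq: "fact n * e^n * (- ((of_nat (Suc n) * G^n * (-e)) * inverse ((G^(Suc n))^2))) = fact (Suc n) * e^(Suc n) / G^(Suc (Suc n))"
      proof -
        have "(G^(Suc n))^2 = G^n * G^(Suc (Suc n))" by (simp add: power2_eq_square power_add[symmetric] power_Suc)
        then show ?thesis using G by (simp add: divide_inverse mult_ac)
      qed
      show ?thesis using d3 unfolding eq by (simp add: G_def divide_inverse)
    qed
  qed
  finally show ?case by simp
qed

lemma negbin:
  fixes z :: real
  assumes z: "0 \<le> z" "z < 1"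
  shows "(\<lambda>j. real ((j+n) choose n) * z^j) sums (1/(1-z)^(Suc n))"
proof -
  define f where "f = (\<lambda>w::complex. 1 / (1 - 1 * w))"
  have nz: "1 - 1 * w \<noteq> 0" if "w \<in> ball 0 1" for w :: complex
    using that by auto
  have hol: "f holomorphic_on ball 0 1" unfolding f_def
    by (intro holomorphic_intros) (use nz in auto)
  have hd: "(deriv ^^ m) f w = fact m * 1^m / (1 - 1 * w)^(Suc m)" if "w \<in> ball 0 1" for m w
    unfolding f_def by (rule kernel_higher_deriv[OF that]) simp
  have tc: "taylor_coeff f m = 1" for m
    using hd[of 0 m] by (simp add: taylor_coeff_def)
  have zb: "norm (complex_of_real z) < 1" using z by simp
  from deriv_taylor[OF hol zb, of n]
  have "(\<lambda>j. of_nat ((j+n) choose n) * (complex_of_real z)^j) sums (1 / (1 - complex_of_real z)^(Suc n))"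
    using hd[of "complex_of_real z" n] zb by (simp add: tc)
  then have "(\<lambda>j. complex_of_real (real ((j+n) choose n) * z^j)) sums complex_of_real (1/(1-z)^(Suc n))"
    by simp
  then show ?thesis by (simp only: sums_of_real_iff)
qed

lemma weighted_CS:
  fixes w y :: "nat \<Rightarrow> real"
  assumes "\<And>i. i \<in> I \<Longrightarrow> 0 \<le> w i"
  shows "(\<Sum>i\<in>I. w i * y i)^2 \<le> (\<Sum>i\<in>I. w i) * (\<Sum>i\<in>I. w i * (y i)^2)"
proof -
  have "(\<Sum>i\<in>I. sqrt (w i) * (sqrt (w i) * y i))^2 \<le> (\<Sum>i\<in>I. (sqrt (w i))^2) * (\<Sum>i\<in>I. (sqrt (w i) * y i)^2)"
    by (rule Cauchy_Schwarz_ineq_sum)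
  moreover have "(\<Sum>i\<in>I. sqrt (w i) * (sqrt (w i) * y i)) = (\<Sum>i\<in>I. w i * y i)"
    by (rule sum.cong) (use assms in \<open>auto simp: real_sqrt_mult_self mult.assoc[symmetric]\<close>)
  moreover have "(\<Sum>i\<in>I. (sqrt (w i))^2) = (\<Sum>i\<in>I. w i)"
    by (rule sum.cong) (use assms in auto)
  moreover have "(\<Sum>i\<in>I. (sqrt (w i) * y i)^2) = (\<Sum>i\<in>I. w i * (y i)^2)"
    by (rule sum.cong) (use assms in \<open>auto simp: power_mult_distrib\<close>)
  ultimately show ?thesis by simp
qed

lemma schur:
  fixes x :: "nat \<Rightarrow> real" and al be t :: real
  assumes x0: "\<And>m. 0 \<le> x m" and sx: "summable (\<lambda>m. (x m)^2)"
    and al: "0 \<le> al" and be: "0 \<le> be" "be < 1" and t: "0 < t" "t \<le> 1"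
    and key: "be + al * (al * t / (1 - be*t)) \<le> t"
  shows "summable (\<lambda>j. real ((j+n) choose n) * be^j * x (j+n))"
    and "summable (\<lambda>n. (al^n * (\<Sum>j. real ((j+n) choose n) * be^j * x (j+n)))^2)"
    and "(\<Sum>n. (al^n * (\<Sum>j. real ((j+n) choose n) * be^j * x (j+n)))^2) \<le> (\<Sum>m. (x m)^2) / (1 - be*t)"
proof -
  define X where "X = (\<Sum>m. (x m)^2)"
  define K where "K = 1 / (1 - be*t)"
  define s where "s = al * t * K"
  have bt: "be * t < 1" using mult_left_le[of t be] be t by linarith
  have bt0: "0 \<le> be * t" using be t by simp
  have K0: "0 < K" using bt by (simp add: K_def)
  have s0: "0 \<le> s" using al t K0 by (simp add: s_def)
  have key': "be + al * s \<le> t" using key by (simp add: s_def K_def)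
  define a where "a n j = real ((j+n) choose n) * be^j * x (j+n)" for n j
  have a0: "0 \<le> a n j" for n j using x0 be by (simp add: a_def)
  have X0: "0 \<le> X" unfolding X_def by (rule suminf_nonneg[OF sx]) simp
  have xle: "x m \<le> sqrt X" for m
  proof -
    have "(x m)^2 \<le> X" unfolding X_def using sum_le_suminf[OF sx, of "{m}"] by simp
    then show ?thesis using x0[of m] by (metis real_le_rsqrt)
  qed
  have inner: "summable (\<lambda>j. a n j)" for n
  proof (rule summable_comparison_test')
    show "summable (\<lambda>j. real ((j+n) choose n) * be^j * sqrt X)"
      using summable_mult2[OF sums_summable[OF negbin[OF be, of n]], of "sqrt X"] by simp
    fix j show "norm (a n j) \<le> real ((j+n) choose n) * be^j * sqrt X"
      using a0[of n j] xle[of "j+n"] be by (simp add: a_def mult_left_mono)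
  qed
  show "summable (\<lambda>j. real ((j+n) choose n) * be^j * x (j+n))" using inner[of n] by (simp add: a_def)
  define T where "T n j = (al * s)^n * real ((j+n) choose n) * be^j * (x (j+n))^2 / t^(j+n)" for n j
  have T0: "0 \<le> T n j" for n j using al s0 be t by (simp add: T_def)
  have W: "(\<Sum>j<J. real ((j+n) choose n) * be^j * t^(j+n)) \<le> t^n * K^(Suc n)" for n J
  proof -
    have "(\<Sum>j<J. real ((j+n) choose n) * be^j * t^(j+n)) = t^n * (\<Sum>j<J. real ((j+n) choose n) * (be*t)^j)"
      by (simp add: sum_distrib_left power_add power_mult_distrib mult_ac)
    also have "(\<Sum>j<J. real ((j+n) choose n) * (be*t)^j) \<le> 1/(1-be*t)^(Suc n)"
      using sum_le_suminf[OF sums_summable[OF negbin[OF bt0 bt, of n]], of "{..<J}"] sums_unique[OF negbin[OF bt0 bt, of n]]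
      using bt0 by simp
    finally show ?thesis using t by (simp add: K_def power_one_over mult_left_mono)
  qed
  have step1: "(al^n * (\<Sum>j<J. a n j))^2 \<le> K * (\<Sum>j<J. T n j)" for n J
  proof -
    define w where "w j = real ((j+n) choose n) * be^j * t^(j+n)" for j
    define y where "y j = x (j+n) / t^(j+n)" for j
    have w0: "0 \<le> w j" for j using be t by (simp add: w_def)
    have ay: "a n j = w j * y j" for j using t by (simp add: a_def w_def y_def)
    have wy: "w j * (y j)^2 = real ((j+n) choose n) * be^j * (x (j+n))^2 / t^(j+n)" for j
    proof -
      have P: "t^(j+n) \<noteq> 0" using t by simp
      have gen: "c * P * (z / P)^2 = c * z^2 / P" if "P \<noteq> 0" for c P z :: real
        using that by (simp add: power2_eq_square)
      show ?thesis unfolding w_def y_def using gen[OF P] by simp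
    qed
    have "(\<Sum>j<J. a n j)^2 \<le> (\<Sum>j<J. w j) * (\<Sum>j<J. w j * (y j)^2)"
      unfolding ay by (rule weighted_CS) (simp add: w0)
    also have "\<dots> \<le> (t^n * K^(Suc n)) * (\<Sum>j<J. w j * (y j)^2)"
    proof (rule mult_right_mono)
      show "(\<Sum>j<J. w j) \<le> t^n * K^(Suc n)" using W[of n J] by (simp add: w_def)
      show "0 \<le> (\<Sum>j<J. w j * (y j)^2)" by (rule sum_nonneg) (simp add: w0)
    qed
    finally have c: "(\<Sum>j<J. a n j)^2 \<le> (t^n * K^(Suc n)) * (\<Sum>j<J. w j * (y j)^2)" .
    have "(al^n * (\<Sum>j<J. a n j))^2 = al^(2*n) * (\<Sum>j<J. a n j)^2" by (simp add: power_mult_distrib power_mult[symmetric] mult.commute)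
    also have "\<dots> \<le> al^(2*n) * ((t^n * K^(Suc n)) * (\<Sum>j<J. w j * (y j)^2))"
      by (rule mult_left_mono[OF c]) (use al in simp)
    also have "\<dots> = K * (\<Sum>j<J. T n j)"
      proof -
      define S where "S = (\<Sum>j<J. real ((j+n) choose n) * be^j * (x (j+n))^2 / t^(j+n))"
      have e1: "(\<Sum>j<J. w j * (y j)^2) = S" unfolding S_def by (simp add: wy)
      have e2: "(\<Sum>j<J. T n j) = (al * s)^n * S" unfolding S_def T_def by (simp add: sum_distrib_left mult_ac)
      have e3: "al^(2*n) = al^n * al^n" by (simp add: mult_2 power_add)
      have e4: "(al * s)^n = al^n * al^n * t^n * K^n" by (simp add: s_def power_mult_distrib)
      show ?thesis unfolding e1 e2 e3 e4 by (simp add: mult_ac)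
    qed
    finally show ?thesis .
  qed
  have step2: "(\<Sum>n<N. \<Sum>j<J. T n j) \<le> X" for N J
  proof -
    have "(\<Sum>n<N. \<Sum>j<J. T n j) = (\<Sum>(n,j)\<in>{..<N} \<times> {..<J}. T n j)"
      by (simp add: sum.cartesian_product)
    also have "\<dots> \<le> (\<Sum>(n,j)\<in>{(n,j). n + j < N + J}. T n j)"
    proof (rule sum_mono2)
      have "{(n,j). n + j < N + J} \<subseteq> {..<N+J} \<times> {..<N+J}" by auto
      then show "finite {(n,j). n + j < N + J}" by (rule finite_subset) simp
    qed (auto simp: T0)
    also have "\<dots> = (\<Sum>m<N+J. \<Sum>n\<le>m. T n (m - n))"
      by (rule sum.triangle_reindex)
    also have "\<dots> \<le> (\<Sum>m<N+J. (x m)^2)"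
    proof (rule sum_mono)
      fix m
      have "(\<Sum>n\<le>m. T n (m - n)) = (x m)^2 / t^m * (\<Sum>n\<le>m. real (m choose n) * (al * s)^n * be^(m-n))"
        by (simp add: T_def sum_distrib_left mult_ac)
      also have "(\<Sum>n\<le>m. real (m choose n) * (al * s)^n * be^(m-n)) = (al * s + be)^m"
        by (simp add: binomial_ring)
      also have "(x m)^2 / t^m * (al * s + be)^m \<le> (x m)^2 / t^m * t^m"
        by (rule mult_left_mono) (use key' al s0 be t in \<open>auto intro!: power_mono\<close>)
      also have "\<dots> = (x m)^2" using t by simp
      finally show "(\<Sum>n\<le>m. T n (m - n)) \<le> (x m)^2" .
    qed
    also have "\<dots> \<le> X" unfolding X_def by (rule sum_le_suminf[OF sx]) auto
    finally show ?thesis .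
  qed
  have part: "(\<Sum>n<N. (al^n * (\<Sum>j. a n j))^2) \<le> K * X" for N
  proof -
    have lim: "(\<lambda>J. \<Sum>n<N. (al^n * (\<Sum>j<J. a n j))^2) \<longlonglongrightarrow> (\<Sum>n<N. (al^n * (\<Sum>j. a n j))^2)"
      by (intro tendsto_intros summable_LIMSEQ inner)
    have "(\<Sum>n<N. (al^n * (\<Sum>j<J. a n j))^2) \<le> K * X" for J
    proof -
      have "(\<Sum>n<N. (al^n * (\<Sum>j<J. a n j))^2) \<le> (\<Sum>n<N. K * (\<Sum>j<J. T n j))"
        by (rule sum_mono) (rule step1)
      also have "\<dots> = K * (\<Sum>n<N. \<Sum>j<J. T n j)" by (simp add: sum_distrib_left)
      also have "\<dots> \<le> K * X" by (rule mult_left_mono[OF step2]) (use K0 in simp)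
      finally show ?thesis .
    qed
    then show ?thesis by (intro LIMSEQ_le_const2[OF lim]) auto
  qed
  have sm: "summable (\<lambda>n. (al^n * (\<Sum>j. a n j))^2)"
    by (rule summableI_nonneg_bounded[OF _ part]) simp
  then show "summable (\<lambda>n. (al^n * (\<Sum>j. real ((j+n) choose n) * be^j * x (j+n)))^2)" by (simp add: a_def)
  have "(\<Sum>n. (al^n * (\<Sum>j. a n j))^2) \<le> K * X" by (rule suminf_le_const[OF sm part])
  then show "(\<Sum>n. (al^n * (\<Sum>j. real ((j+n) choose n) * be^j * x (j+n)))^2) \<le> (\<Sum>m. (x m)^2) / (1 - be*t)"
    by (simp add: a_def K_def X_def)
qed

lemma choose_t:
  fixes al be :: real
  assumes al: "0 \<le> al" and be: "0 \<le> be" "be < 1" and ab: "al + be \<le> 1"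
  shows "\<exists>t. 0 < t \<and> t \<le> 1 \<and> be + al * (al * t / (1 - be*t)) \<le> t \<and>
     1/(1 - be*t) = 2/(1 + al^2 - be^2 + sqrt((1 - al^2 + be^2)^2 - 4*be^2)) \<and>
     (be \<noteq> 0 \<longrightarrow> be * t^2 - (1 - al^2 + be^2) * t + be = 0)"
proof (cases "be = 0")
  case True
  have "al^2 \<le> 1" using al ab True by (simp add: power_le_one)
  then have D: "sqrt((1 - al^2 + be^2)^2 - 4*be^2) = 1 - al^2" using True by simp
  have aa: "al * (al * 1 / (1 - be * 1)) \<le> 1" using True al ab by (simp add: mult_le_one)
  show ?thesis
  proof (intro exI[of _ 1] conjI impI)
    show "be + al * (al * 1 / (1 - be * 1)) \<le> 1" using aa True by simp
    show "1 / (1 - be * 1) = 2 / (1 + al\<^sup>2 - be\<^sup>2 + sqrt ((1 - al\<^sup>2 + be\<^sup>2)\<^sup>2 - 4 * be\<^sup>2))"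
      using True D by simp
    show "be * 1\<^sup>2 - (1 - al\<^sup>2 + be\<^sup>2) * 1 + be = 0" if "be \<noteq> 0" using True that by simp
  qed simp_all
next
  case False
  then have bp: "0 < be" using be by simp
  define Q where "Q = 1 - al^2 + be^2"
  define disc where "disc = Q^2 - 4*be^2"
  define D where "D = sqrt disc"
  have q1: "Q - 2*be = (1-be)^2 - al^2" by (simp add: Q_def power2_eq_square algebra_simps)
  have q2: "Q + 2*be = (1+be)^2 - al^2" by (simp add: Q_def power2_eq_square algebra_simps)
  have alb: "al \<le> 1 - be" using ab by simp
  have "al^2 \<le> (1-be)^2" by (rule power_mono[OF alb al])
  then have Qm: "0 \<le> Q - 2*be" using q1 by simp
  have Qp: "0 \<le> Q + 2*be" using Qm bp by simp
  have dd: "disc = (Q - 2*be) * (Q + 2*be)" by (simp add: disc_def power2_eq_square algebra_simps)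
  have disc0: "0 \<le> disc" unfolding dd by (rule mult_nonneg_nonneg[OF Qm Qp])
  have D0: "0 \<le> D" using disc0 by (simp add: D_def)
  have D2: "D^2 = disc" using disc0 by (simp add: D_def)
  have DQ: "D < Q"
  proof -
    have "D^2 < Q^2" using D2 bp by (simp add: disc_def)
    then show ?thesis using Qm bp by (smt (verit) D0 power_mono)
  qed
  have QD: "Q - 2*be \<le> D"
  proof -
    have "(Q - 2*be)^2 \<le> D^2" using D2 dd Qm bp by (simp add: power2_eq_square mult_left_mono)
    then show ?thesis using D0 by (rule power2_le_imp_le)
  qed
  define t where "t = (Q - D) / (2*be)"
  have t0: "0 < t" using DQ bp by (simp add: t_def)
  have t1: "t \<le> 1" using QD bp by (simp add: t_def)
  have bt: "1 - be * t = (1 + al^2 - be^2 + D) / 2"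
    using bp by (simp add: t_def Q_def field_simps)
  have bt0: "0 < 1 - be * t"
  proof -
    have "be * t \<le> be" using t1 be by (simp add: mult_left_le)
    then show ?thesis using be by simp
  qed
  have root: "be * t^2 - Q * t + be = 0"
  proof -
    have "4 * be * (be * t^2 - Q * t + be) = (Q - D)^2 - 2 * Q * (Q - D) + 4 * be^2"
      using bp by (simp add: t_def power2_eq_square field_simps)
    also have "\<dots> = D^2 - Q^2 + 4 * be^2" by (simp add: power2_eq_square algebra_simps)
    also have "\<dots> = 0" using D2 by (simp add: disc_def)
    finally show ?thesis using bp by simp
  qed
  have key: "be + al * (al * t / (1 - be*t)) \<le> t"
  proof -
    have "be * (1 - be*t) + al^2 * t = t * (1 - be*t)"
      using root by (simp add: Q_def power2_eq_square algebra_simps)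
    then have "be + al^2 * t / (1 - be*t) = t" using bt0 by (simp add: field_simps)
    then show ?thesis by (simp add: power2_eq_square)
  qed
  have L: "1/(1 - be*t) = 2/(1 + al^2 - be^2 + D)" unfolding bt by simp
  show ?thesis
    by (intro exI[of _ t] conjI t0 t1 key impI) (use L root in \<open>simp_all only: D_def disc_def Q_def\<close>)
qed

lemma affine_maps:
  fixes a b w :: complex
  assumes ab: "norm a + norm b \<le> 1" and b: "norm b < 1" and w: "norm w < 1"
  shows "norm (a*w + b) < 1"
proof (cases "a = 0")
  case True then show ?thesis using b by simp
next
  case False
  have "norm (a*w + b) \<le> norm a * norm w + norm b" by (metis norm_mult norm_triangle_ineq)
  also have "norm a * norm w < norm a" using False w by simp
  finally show ?thesis using ab by simp
qed

lemma affine_bound: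
  fixes a b :: complex
  assumes f: "f \<in> H2" and ab: "norm a + norm b \<le> 1" and b: "norm b < 1"
  shows "(\<lambda>z. f (a*z + b)) \<in> H2"
    "(H2_norm (\<lambda>z. f (a*z + b)))^2 \<le> 2/(1 + (norm a)^2 - (norm b)^2 + sqrt((1 - (norm a)^2 + (norm b)^2)^2 - 4*(norm b)^2)) * (H2_norm f)^2"
proof -
  define L where "L = 2/(1 + (norm a)^2 - (norm b)^2 + sqrt((1 - (norm a)^2 + (norm b)^2)^2 - 4*(norm b)^2))"
  have hol: "f holomorphic_on ball 0 1" and smf: "summable (\<lambda>n. (cmod (taylor_coeff f n))^2)"
    using f by (auto simp: H2_def)
  define c where "c = taylor_coeff f"
  define g where "g = (\<lambda>z. f (a*z + b))"
  have maps: "(\<lambda>z. a*z + b) ` ball 0 1 \<subseteq> ball 0 1" using affine_maps[OF ab b] by auto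
  have holg: "g holomorphic_on ball 0 1"
  proof -
    have "(\<lambda>z. a*z + b) holomorphic_on ball 0 1" by (intro holomorphic_intros)
    from holomorphic_on_compose_gen[OF this hol maps] show ?thesis by (simp add: o_def g_def)
  qed
  obtain t where t0: "0 < t" and t1: "t \<le> 1" and key: "norm b + norm a * (norm a * t / (1 - norm b * t)) \<le> t"
    and Lt: "1/(1 - norm b * t) = L"
    using choose_t[OF norm_ge_zero norm_ge_zero b ab] unfolding L_def by (elim exE conjE) blast
  define x where "x m = cmod (c m)" for m
  have x0: "0 \<le> x m" for m by (simp add: x_def)
  have sx: "summable (\<lambda>m. (x m)^2)" using smf by (simp add: x_def c_def)
  note S = schur[OF x0 sx norm_ge_zero norm_ge_zero b t0 t1 key]
  define y where "y n = (norm a)^n * (\<Sum>j. real ((j+n) choose n) * (norm b)^j * x (j+n))" for n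
  have y0: "0 \<le> y n" for n unfolding y_def
    by (intro mult_nonneg_nonneg suminf_nonneg S(1)) (auto simp: x0)
  have dn: "cmod (taylor_coeff g n) \<le> y n" for n
  proof -
    have "taylor_coeff g n = a^n * ((deriv^^n) f b / fact n)"
      unfolding g_def by (rule taylor_coeff_affine[OF hol affine_maps[OF ab b]])
    also have "(deriv^^n) f b / fact n = (\<Sum>j. of_nat ((j+n) choose n) * c (j+n) * b^j)"
      using sums_unique[OF deriv_taylor[OF hol b, of n]] by (simp add: c_def)
    finally have e: "taylor_coeff g n = a^n * (\<Sum>j. of_nat ((j+n) choose n) * c (j+n) * b^j)" .
    have sn: "summable (\<lambda>j. norm (of_nat ((j+n) choose n) * c (j+n) * b^j))"
      using S(1)[of n] by (simp add: x_def norm_mult norm_power mult_ac)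
    have "norm (\<Sum>j. of_nat ((j+n) choose n) * c (j+n) * b^j) \<le> (\<Sum>j. norm (of_nat ((j+n) choose n) * c (j+n) * b^j))"
      by (rule summable_norm[OF sn])
    also have "\<dots> = (\<Sum>j. real ((j+n) choose n) * (norm b)^j * x (j+n))"
      by (simp add: x_def norm_mult norm_power mult_ac)
    finally show ?thesis unfolding e y_def
      by (simp add: norm_mult norm_power mult_left_mono)
  qed
  have dn2: "(cmod (taylor_coeff g n))^2 \<le> (y n)^2" for n
    by (rule power_mono[OF dn]) simp
  have smy: "summable (\<lambda>n. (y n)^2)" using S(2) by (simp add: y_def)
  have smg: "summable (\<lambda>n. (cmod (taylor_coeff g n))^2)"
    by (rule summable_comparison_test'[OF smy]) (simp add: dn2)
  show gH: "(\<lambda>z. f (a*z + b)) \<in> H2" using holg smg by (simp add: H2_def g_def)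
  have "(H2_norm g)^2 = (\<Sum>n. (cmod (taylor_coeff g n))^2)" using H2_norm_sq gH by (simp add: g_def)
  also have "\<dots> \<le> (\<Sum>n. (y n)^2)" by (rule suminf_le[OF dn2 smg smy])
  also have "\<dots> \<le> (\<Sum>m. (x m)^2) / (1 - norm b * t)" using S(3) by (simp add: y_def)
  also have "\<dots> = L * (H2_norm f)^2"
    using H2_norm_sq[OF f] unfolding Lt[symmetric] by (simp add: x_def c_def)
  finally show "(H2_norm (\<lambda>z. f (a*z + b)))^2 \<le> 2/(1 + (norm a)^2 - (norm b)^2 + sqrt((1 - (norm a)^2 + (norm b)^2)^2 - 4*(norm b)^2)) * (H2_norm f)^2"
    by (simp add: g_def L_def)
qed

lemma circlepath_cis: "circlepath 0 r s = complex_of_real r * cis (2 * pi * s)"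
  by (simp add: circlepath cis_conv_exp mult_ac)

lemma inner_M2_lim:
  assumes inner: "inner_function \<psi>"
    and rk: "\<And>k. 0 < rk k" "\<And>k. rk k < 1" and lim: "rk \<longlonglongrightarrow> 1"
  shows "(\<lambda>k. M2 \<psi> (rk k)) \<longlonglongrightarrow> 1"
proof -
  have hol: "\<psi> holomorphic_on ball 0 1" and maps: "\<psi> ` ball 0 1 \<subseteq> ball 0 1"
    and ae: "AE t in lebesgue. t \<in> {0..2*pi} \<longrightarrow>
        (\<exists>L. norm L = 1 \<and> ((\<lambda>r. \<psi> (complex_of_real r * cis t)) \<longlongrightarrow> L) (at_left 1))"
    using inner by (auto simp: inner_function_def)
  from ae obtain N where N: "{t \<in> space lebesgue. \<not> (t \<in> {0..2*pi} \<longrightarrow>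
        (\<exists>L. norm L = 1 \<and> ((\<lambda>r. \<psi> (complex_of_real r * cis t)) \<longlongrightarrow> L) (at_left 1)))} \<subseteq> N"
      "emeasure lebesgue N = 0" "N \<in> sets lebesgue"
    by (rule AE_E)
  have negN: "negligible N" using N by (simp add: negligible_iff_null_sets null_sets_def)
  define N' where "N' = (\<lambda>t. t / (2*pi)) ` N"
  have negN': "negligible N'" unfolding N'_def
  proof (rule negligible_locally_Lipschitz_image[OF _ negN])
    fix x assume "x \<in> N"
    show "\<exists>T B. open T \<and> x \<in> T \<and> (\<forall>y\<in>N \<inter> T. norm (y / (2*pi) - x / (2*pi)) \<le> B * norm (y - x))"
      by (rule exI[of _ UNIV], rule exI[of _ "1/(2*pi)"]) (auto simp: diff_divide_distrib[symmetric])
  qed simp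
  have filt: "filterlim rk (at_left 1) sequentially"
    unfolding filterlim_at using lim rk by (auto intro!: always_eventually simp: less_imp_neq)
  define fk where "fk k s = (if s \<in> N' then 1 else (cmod (\<psi> (circlepath 0 (rk k) s)))^2)" for k s
  have fki: "(fk k has_integral M2 \<psi> (rk k)) {0..1}" for k
    by (rule has_integral_spike[OF negN' _ M2_integral[OF hol rk(1) rk(2)]]) (simp add: fk_def)
  have bd: "norm (fk k s) \<le> 1" for k s
  proof -
    have "norm (circlepath 0 (rk k) s) < 1" using rk[of k] by (simp add: less_imp_le)
    then have "norm (\<psi> (circlepath 0 (rk k) s)) < 1" using maps by (auto simp: subset_iff)
    then show ?thesis by (simp add: fk_def abs_square_le_1 less_imp_le)
  qed
  have conv: "(\<lambda>k. fk k s) \<longlonglongrightarrow> 1" if s: "s \<in> {0..1}" for s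
  proof (cases "s \<in> N'")
    case True then show ?thesis by (simp add: fk_def)
  next
    case False
    define t where "t = 2 * pi * s"
    have "t \<notin> N"
    proof
      assume "t \<in> N"
      then have "t / (2*pi) \<in> N'" unfolding N'_def by blast
      then show False using False by (simp add: t_def)
    qed
    then have "t \<in> {0..2*pi} \<longrightarrow> (\<exists>L. norm L = 1 \<and> ((\<lambda>r. \<psi> (complex_of_real r * cis t)) \<longlongrightarrow> L) (at_left 1))"
      using N(1) by auto
    moreover have "t \<in> {0..2*pi}" using s by (simp add: t_def)
    ultimately obtain L where L: "norm L = 1" "((\<lambda>r. \<psi> (complex_of_real r * cis t)) \<longlongrightarrow> L) (at_left 1)"
      by blast
    have "(\<lambda>k. \<psi> (complex_of_real (rk k) * cis t)) \<longlonglongrightarrow> L"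
      using filterlim_compose[OF L(2) filt] .
    then have "(\<lambda>k. (cmod (\<psi> (complex_of_real (rk k) * cis t)))^2) \<longlonglongrightarrow> (cmod L)^2"
      by (intro tendsto_intros)
    then show ?thesis using False L(1) by (simp add: fk_def circlepath_cis t_def)
  qed
  have "(\<lambda>k. integral {0..1} (fk k)) \<longlonglongrightarrow> integral {0..1} (\<lambda>s::real. 1::real)"
    by (rule dominated_convergence(2)[where h="\<lambda>_. 1"])
       (use fki bd conv in \<open>auto intro: has_integral_integrable\<close>)
  moreover have "integral {0..1} (fk k) = M2 \<psi> (rk k)" for k using fki[of k] by (rule integral_unique)
  ultimately show ?thesis by simp
qed

lemma pw_ineq:
  fixes e w :: complex
  assumes e: "norm e < 1" and w: "norm w < 1"
  shows "Re ((1 + e*w)/(1 - e*w)) / (1 - (cmod e)^2) - (cmod e)^2/((1 - cmod e)^2 * (1 - (cmod e)^2)) * (1 - (cmod w)^2)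
     \<le> 1/(cmod (1 - e*w))^2"
proof -
  define z where "z = e * w"
  define E where "E = cmod e"
  define W where "W = cmod w"
  define A where "A = (cmod (1 - z))^2"
  have E: "0 \<le> E" "E < 1" using e by (auto simp: E_def)
  have W: "0 \<le> W" "W < 1" using w by (auto simp: W_def)
  have zE: "cmod z \<le> E" using w mult_left_le[of "cmod w" "cmod e"] by (simp add: z_def E_def norm_mult)
  have "1 - cmod z \<le> cmod (1 - z)" by (metis norm_one norm_triangle_ineq2)
  then have "1 - E \<le> cmod (1 - z)" using zE by simp
  then have A1: "(1 - E)^2 \<le> A" unfolding A_def by (rule power_mono) (use E in simp)
  have A0: "0 < A" using A1 E by (smt (verit) zero_less_power)
  have Re: "Re ((1 + z)/(1 - z)) = (1 - E^2 * W^2) / A"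
  proof -
    have A': "A = (1 - Re z)^2 + (Im z)^2" unfolding A_def by (simp add: cmod_power2)
    have "Re ((1 + z)/(1 - z)) = ((1 + Re z)*(1 - Re z) + Im z * (- Im z)) / ((1 - Re z)^2 + (Im z)^2)"
      by (simp add: Re_divide)
    also have "\<dots> = (1 - (Re z)^2 - (Im z)^2) / A" unfolding A' by (simp add: power2_eq_square algebra_simps)
    finally have "Re ((1 + z)/(1 - z)) = (1 - (Re z)^2 - (Im z)^2) / A" .
    moreover have "(Re z)^2 + (Im z)^2 = E^2 * W^2"
    proof -
      have "(Re z)^2 + (Im z)^2 = (cmod z)^2" by (simp add: cmod_power2)
      also have "\<dots> = E^2 * W^2" by (simp add: z_def E_def W_def norm_mult power_mult_distrib)
      finally show ?thesis .
    qed
    ultimately show ?thesis by (simp add: algebra_simps)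
  qed
  have E2: "0 < 1 - E^2" using E by (simp add: power_less_one_iff abs_square_less_1)
  have split: "(1 - E^2 * W^2) / A / (1 - E^2) = 1/A + E^2 * (1 - W^2) / (A * (1 - E^2))"
    using A0 E2 by (simp add: field_simps)
  have le: "E^2 * (1 - W^2) / (A * (1 - E^2)) \<le> E^2 * (1 - W^2) / ((1 - E)^2 * (1 - E^2))"
  proof (rule divide_left_mono)
    show "0 \<le> E^2 * (1 - W^2)" using W by (simp add: abs_square_le_1 less_imp_le)
    show "(1 - E)^2 * (1 - E^2) \<le> A * (1 - E^2)" by (rule mult_right_mono[OF A1]) (use E2 in simp)
    show "0 < A * (1 - E^2) * ((1 - E)^2 * (1 - E^2))" using A0 E2 E by simp
  qed
  show ?thesis
    unfolding z_def[symmetric] Re A_def[symmetric] E_def[symmetric] W_def[symmetric]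
    using split le by (simp add: mult_ac)
qed

lemma inner_props:
  assumes inner: "inner_function \<psi>"
  shows "(\<lambda>z. z * \<psi> z) holomorphic_on ball 0 1" "\<And>z. norm z < 1 \<Longrightarrow> norm (z * \<psi> z) \<le> norm z"
    "\<And>z. norm z < 1 \<Longrightarrow> norm (z * \<psi> z) < 1"
proof -
  have hol: "\<psi> holomorphic_on ball 0 1" and maps: "\<psi> ` ball 0 1 \<subseteq> ball 0 1"
    using inner by (auto simp: inner_function_def)
  show "(\<lambda>z. z * \<psi> z) holomorphic_on ball 0 1" by (intro holomorphic_intros hol)
  fix z :: complex assume z: "norm z < 1"
  then have p: "norm (\<psi> z) < 1" using maps by (auto simp: subset_iff)
  show le: "norm (z * \<psi> z) \<le> norm z"
    using p mult_left_le[of "norm (\<psi> z)" "norm z"] by (simp add: norm_mult)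
  then show "norm (z * \<psi> z) < 1" using z by simp
qed

lemma lower_inner:
  assumes inner: "inner_function \<psi>" and e: "norm e < 1"
    and GH: "(\<lambda>z. c / (1 - e * (z * \<psi> z))) \<in> H2"
  shows "(cmod c)^2 / (1 - (cmod e)^2) \<le> (H2_norm (\<lambda>z. c / (1 - e * (z * \<psi> z))))^2"
proof -
  define G where "G = (\<lambda>z. c / (1 - e * (z * \<psi> z)))"
  define u where "u = (\<lambda>z. z * \<psi> z)"
  define E where "E = cmod e"
  define K where "K = E^2 / ((1 - E)^2 * (1 - E^2))"
  define P where "P = (\<lambda>z. (1 + e * u z) / (1 - e * u z))"
  have hol: "\<psi> holomorphic_on ball 0 1"
    using inner by (auto simp: inner_function_def)
  have holu: "u holomorphic_on ball 0 1" and u1: "\<And>z. norm z < 1 \<Longrightarrow> norm (u z) < 1"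
    using inner_props[OF inner] by (auto simp: u_def)
  have nz: "1 - e * u z \<noteq> 0" if "norm z < 1" for z
  proof
    assume "1 - e * u z = 0"
    then have "norm (e * u z) = 1" by (metis eq_iff_diff_eq_0 norm_one)
    moreover have "norm (e * u z) < 1"
      using u1[OF that] e by (simp add: norm_mult) (metis mult_le_one norm_ge_zero less_le_not_le mult_strict_mono' zero_less_one mult_1_left)
    ultimately show False by simp
  qed
  have holP: "P holomorphic_on ball 0 1" unfolding P_def
    by (intro holomorphic_intros holu) (use nz in auto)
  have P0: "P 0 = 1" by (simp add: P_def u_def)
  define rk where "rk k = 1 - inverse (real (Suc (Suc k)))" for k
  have rk0: "0 < rk k" for k by (simp add: rk_def field_simps)
  have rk1: "rk k < 1" for k by (simp add: rk_def)
  have rklim: "rk \<longlonglongrightarrow> 1"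
  proof -
    have "(\<lambda>k. inverse (real (Suc (Suc k)))) \<longlonglongrightarrow> 0"
      by (rule LIMSEQ_Suc[OF LIMSEQ_inverse_real_of_nat])
    from tendsto_diff[OF tendsto_const this, of 1] show ?thesis unfolding rk_def by simp
  qed
  have bound: "(cmod c)^2 * (1 / (1 - E^2) - K * (1 - r^2 * M2 \<psi> r)) \<le> M2 G r" if r: "0 < r" "r < 1" for r
  proof -
    define \<gamma> where "\<gamma> = circlepath 0 r"
    have g: "cmod (\<gamma> s) = r" for s using r by (simp add: \<gamma>_def)
    have mean: "((\<lambda>s. P (\<gamma> s)) has_integral 1) {0..1}"
      using coef_integral[OF holP r, of 0] P0 by (simp add: \<gamma>_def taylor_coeff_def)
    have meanRe: "((\<lambda>s. Re (P (\<gamma> s))) has_integral 1) {0..1}"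
      using has_integral_linear[OF mean bounded_linear_Re] by (simp add: o_def)
    have ipsi: "((\<lambda>s. (cmod (\<psi> (\<gamma> s)))^2) has_integral M2 \<psi> r) {0..1}"
      unfolding \<gamma>_def by (rule M2_integral[OF hol r])
    have holG: "G holomorphic_on ball 0 1" unfolding G_def
      by (intro holomorphic_intros hol) (use nz in \<open>auto simp: u_def\<close>)
    have iG: "((\<lambda>s. (cmod (G (\<gamma> s)))^2) has_integral M2 G r) {0..1}"
      unfolding \<gamma>_def by (rule M2_integral[OF holG r])
    have iR: "((\<lambda>s. (cmod c)^2 * (Re (P (\<gamma> s)) / (1 - E^2) - K * (1 - r^2 * (cmod (\<psi> (\<gamma> s)))^2)))
        has_integral (cmod c)^2 * (1 / (1 - E^2) - K * (1 - r^2 * M2 \<psi> r))) {0..1}"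
      by (intro has_integral_mult_right has_integral_diff has_integral_divide meanRe
          has_integral_const_real[of 1 0 1, simplified] ipsi)
    show ?thesis
    proof (rule has_integral_le[OF iR iG])
      fix s :: real assume "s \<in> {0..1}"
      have w: "norm (u (\<gamma> s)) < 1" using u1[of "\<gamma> s"] g r by simp
      have uu: "(cmod (u (\<gamma> s)))^2 = r^2 * (cmod (\<psi> (\<gamma> s)))^2"
        by (simp add: u_def norm_mult g power_mult_distrib)
      have pw: "Re (P (\<gamma> s)) / (1 - E^2) - K * (1 - r^2 * (cmod (\<psi> (\<gamma> s)))^2) \<le> 1 / (cmod (1 - e * u (\<gamma> s)))^2"
        using pw_ineq[OF e w] unfolding P_def K_def E_def uu by simp
      have "(cmod (G (\<gamma> s)))^2 = (cmod c)^2 * (1 / (cmod (1 - e * u (\<gamma> s)))^2)"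
        by (simp add: G_def u_def norm_divide power_divide)
      then show "(cmod c)^2 * (Re (P (\<gamma> s)) / (1 - E^2) - K * (1 - r^2 * (cmod (\<psi> (\<gamma> s)))^2)) \<le> (cmod (G (\<gamma> s)))^2"
        using mult_left_mono[OF pw, of "(cmod c)^2"] by simp
    qed
  qed
  have lim: "(\<lambda>k. (cmod c)^2 * (1 / (1 - E^2) - K * (1 - (rk k)^2 * M2 \<psi> (rk k)))) \<longlonglongrightarrow>
      (cmod c)^2 * (1 / (1 - E^2) - K * (1 - 1^2 * 1))"
    by (intro tendsto_intros inner_M2_lim[OF inner rk0 rk1 rklim] rklim)
  have each: "(cmod c)^2 * (1 / (1 - E^2) - K * (1 - (rk k)^2 * M2 \<psi> (rk k))) \<le> (H2_norm G)^2" for k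
  proof -
    have "(cmod c)^2 * (1 / (1 - E^2) - K * (1 - (rk k)^2 * M2 \<psi> (rk k))) \<le> M2 G (rk k)"
      by (rule bound[OF rk0 rk1])
    also have "\<dots> \<le> (H2_norm G)^2" using GH unfolding G_def by (rule M2_le_H2[OF _ rk0 rk1])
    finally show ?thesis .
  qed
  have "(cmod c)^2 * (1 / (1 - E^2) - K * (1 - 1^2 * 1)) \<le> (H2_norm G)^2"
    by (rule LIMSEQ_le_const2[OF lim]) (use each in auto)
  then show ?thesis by (simp add: G_def E_def)
qed

lemma kernel_H2:
  fixes w :: complex
  assumes w: "norm w < 1"
  shows "(\<lambda>z. 1 / (1 - cnj w * z)) \<in> H2" "(H2_norm (\<lambda>z. 1 / (1 - cnj w * z)))^2 = 1 / (1 - (cmod w)^2)"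
proof -
  define k where "k = (\<lambda>z. 1 / (1 - cnj w * z))"
  have nz: "1 - cnj w * z \<noteq> 0" if "norm z < 1" for z
  proof
    assume "1 - cnj w * z = 0"
    then have "norm (cnj w * z) = 1" by (metis eq_iff_diff_eq_0 norm_one)
    moreover have "norm (cnj w * z) < 1"
      using that w by (simp add: norm_mult) (metis mult_le_one norm_ge_zero less_le_not_le mult_strict_mono' zero_less_one mult_1_left)
    ultimately show False by simp
  qed
  have hol: "k holomorphic_on ball 0 1" unfolding k_def by (intro holomorphic_intros) (use nz in auto)
  have tc: "taylor_coeff k n = (cnj w)^n" for n
    using kernel_higher_deriv[of 0 "cnj w" n] w by (simp add: taylor_coeff_def k_def less_imp_le)
  have w2: "(cmod w)^2 < 1" using w by (simp add: abs_square_less_1)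
  have geo: "(\<lambda>n. (cmod (taylor_coeff k n))^2) sums (1 / (1 - (cmod w)^2))"
  proof -
    have "(\<lambda>n. ((cmod w)^2)^n) sums (1 / (1 - (cmod w)^2))"
      using geometric_sums[of "(cmod w)^2"] w2 by simp
    then show ?thesis by (simp add: tc norm_power power_mult[symmetric] mult.commute)
  qed
  show kH: "(\<lambda>z. 1 / (1 - cnj w * z)) \<in> H2" using hol sums_summable[OF geo] by (simp add: H2_def k_def)
  show "(H2_norm (\<lambda>z. 1 / (1 - cnj w * z)))^2 = 1 / (1 - (cmod w)^2)"
    using H2_norm_sq[OF kH] sums_unique[OF geo] by (simp add: k_def)
qed

lemma H2_norm_nonneg:
  assumes "f \<in> H2" shows "0 \<le> H2_norm f"
  unfolding H2_norm_def by (rule real_sqrt_ge_zero, rule suminf_nonneg) (use assms in \<open>auto simp: H2_def\<close>)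

lemma scale_H2:
  assumes f: "f \<in> H2"
  shows "(\<lambda>z. c * f z) \<in> H2" "H2_norm (\<lambda>z. c * f z) = cmod c * H2_norm f"
proof -
  have hol: "f holomorphic_on ball 0 1" and sm: "summable (\<lambda>n. (cmod (taylor_coeff f n))^2)"
    using f by (auto simp: H2_def)
  have tc: "taylor_coeff (\<lambda>z. c * f z) n = c * taylor_coeff f n" for n
    using higher_deriv_cmult[OF hol _ open_ball, of 0 n c] by (simp add: taylor_coeff_def)
  have e: "(cmod (taylor_coeff (\<lambda>z. c * f z) n))^2 = (cmod c)^2 * (cmod (taylor_coeff f n))^2" for n
    by (simp add: tc norm_mult power_mult_distrib)
  show cH: "(\<lambda>z. c * f z) \<in> H2"
    using hol summable_mult[OF sm, of "(cmod c)^2"] by (auto simp: H2_def e intro!: holomorphic_intros)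
  have "(H2_norm (\<lambda>z. c * f z))^2 = (cmod c)^2 * (H2_norm f)^2"
    using H2_norm_sq[OF cH] H2_norm_sq[OF f] suminf_mult[OF sm, of "(cmod c)^2"] by (simp add: e)
  also have "\<dots> = (cmod c * H2_norm f)^2" by (simp add: power_mult_distrib)
  finally show "H2_norm (\<lambda>z. c * f z) = cmod c * H2_norm f"
    by (rule power2_eq_imp_eq) (use H2_norm_nonneg[OF cH] H2_norm_nonneg[OF f] in auto)
qed

lemma zero_H2: "(\<lambda>z. 0) \<in> H2" "H2_norm (\<lambda>z. 0) = 0"
  by (auto simp: H2_def H2_norm_def taylor_coeff_def)

lemma upper_phi:
  fixes a b :: complex
  assumes inner: "inner_function \<psi>" and ab: "norm a + norm b \<le> 1" and b: "norm b < 1" and f: "f \<in> H2"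
  shows "(\<lambda>z. f (a * z * \<psi> z + b)) \<in> H2"
    "(H2_norm (\<lambda>z. f (a * z * \<psi> z + b)))^2 \<le> 2/(1 + (norm a)^2 - (norm b)^2 + sqrt((1 - (norm a)^2 + (norm b)^2)^2 - 4*(norm b)^2)) * (H2_norm f)^2"
proof -
  define F where "F = (\<lambda>w. f (a*w + b))"
  have FH: "F \<in> H2" unfolding F_def by (rule affine_bound(1)[OF f ab b])
  have FB: "(H2_norm F)^2 \<le> 2/(1 + (norm a)^2 - (norm b)^2 + sqrt((1 - (norm a)^2 + (norm b)^2)^2 - 4*(norm b)^2)) * (H2_norm f)^2"
    unfolding F_def by (rule affine_bound(2)[OF f ab b])
  note U = inner_props[OF inner]
  have holF: "F holomorphic_on ball 0 1" using FH by (simp add: H2_def)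
  have maps: "(\<lambda>z. z * \<psi> z) ` ball 0 1 \<subseteq> ball 0 1" using U(3) by auto
  have hol: "(\<lambda>z. F (z * \<psi> z)) holomorphic_on ball 0 1"
    using holomorphic_on_compose_gen[OF U(1) holF maps] by (simp add: o_def)
  have e: "(\<lambda>z. F (z * \<psi> z)) = (\<lambda>z. f (a * z * \<psi> z + b))" by (simp add: F_def mult.assoc)
  have M: "M2 (\<lambda>z. F (z * \<psi> z)) r \<le> (H2_norm F)^2" if "0 < r" "r < 1" for r
    by (rule littlewood[OF FH U(1) U(2) that])
  note H = H2_of_M2[OF hol M]
  show "(\<lambda>z. f (a * z * \<psi> z + b)) \<in> H2" using H(1) e by simp
  show "(H2_norm (\<lambda>z. f (a * z * \<psi> z + b)))^2 \<le> 2/(1 + (norm a)^2 - (norm b)^2 + sqrt((1 - (norm a)^2 + (norm b)^2)^2 - 4*(norm b)^2)) * (H2_norm f)^2"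
    using H(2) FB e by simp
qed

lemma lower_w:
  fixes a b w :: complex
  assumes inner: "inner_function \<psi>" and ab: "norm a + norm b \<le> 1" and b: "norm b < 1" and w: "norm w < 1"
    and bdd: "bdd_above ((\<lambda>f. H2_norm (comp_op (\<lambda>z. a * z * \<psi> z + b) f)) ` {f \<in> H2. H2_norm f \<le> 1})"
  shows "sqrt ((1 - (cmod w)^2) / ((cmod (1 - cnj w * b))^2 - (cmod (cnj w * a))^2)) \<le> comp_op_norm (\<lambda>z. a * z * \<psi> z + b)"
proof -
  define D where "D = 1 - cnj w * b"
  define e where "e = cnj w * a / D"
  define k where "k = (\<lambda>z. 1 / (1 - cnj w * z))"
  define G where "G = (\<lambda>z. (1/D) / (1 - e * (z * \<psi> z)))"
  have Dlow: "1 - cmod w * cmod b \<le> cmod D"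
  proof -
    have "1 - cmod (cnj w * b) \<le> cmod D" unfolding D_def by (metis norm_one norm_triangle_ineq2)
    then show ?thesis by (simp add: norm_mult)
  qed
  have wab: "cmod w * cmod a + cmod w * cmod b \<le> cmod w"
    using mult_left_mono[OF ab, of "cmod w"] by (simp add: algebra_simps)
  have waD: "cmod (cnj w * a) < cmod D" using Dlow wab w by (simp add: norm_mult)
  have D0: "D \<noteq> 0" using waD by auto
  have e1: "norm e < 1" using waD D0 by (simp add: e_def norm_divide norm_mult)
  have kH: "k \<in> H2" and kn: "(H2_norm k)^2 = 1 / (1 - (cmod w)^2)"
    using kernel_H2[OF w] by (simp_all add: k_def)
  have comp: "comp_op (\<lambda>z. a * z * \<psi> z + b) k = G"
  proof
    fix z
    have "1 / (1 - cnj w * (a * z * \<psi> z + b)) = 1 / (D - cnj w * a * (z * \<psi> z))"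
      by (simp add: D_def algebra_simps)
    also have "\<dots> = (1/D) / (1 - e * (z * \<psi> z))"
    proof -
      have "D * (1 - e * (z * \<psi> z)) = D - cnj w * a * (z * \<psi> z)"
        using D0 by (simp add: e_def algebra_simps)
      then show ?thesis by (simp add: divide_divide_eq_left)
    qed
    finally show "comp_op (\<lambda>z. a * z * \<psi> z + b) k z = G z"
      by (simp add: comp_op_def k_def G_def)
  qed
  have GH: "G \<in> H2" using upper_phi(1)[OF inner ab b kH] comp by (simp add: comp_op_def o_def)
  have Glow: "(cmod (1/D))^2 / (1 - (cmod e)^2) \<le> (H2_norm G)^2"
    using lower_inner[OF inner e1, of "1/D"] GH by (simp add: G_def)
  have w2: "0 < 1 - (cmod w)^2" using w by (simp add: abs_square_less_1)
  define c where "c = sqrt (1 - (cmod w)^2)"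
  have c0: "0 < c" using w2 by (simp add: c_def)
  have knorm: "H2_norm k = 1 / c"
  proof -
    have "(H2_norm k)^2 = (1/c)^2" using kn w2 by (simp add: c_def power_divide)
    then show ?thesis by (rule power2_eq_imp_eq) (use H2_norm_nonneg[OF kH] c0 in auto)
  qed
  define f' where "f' = (\<lambda>z. complex_of_real c * k z)"
  have f'H: "f' \<in> H2" unfolding f'_def by (rule scale_H2(1)[OF kH])
  have f'n: "H2_norm f' = 1" unfolding f'_def using scale_H2(2)[OF kH, of "complex_of_real c"] knorm c0 by simp
  have compf': "comp_op (\<lambda>z. a * z * \<psi> z + b) f' = (\<lambda>z. complex_of_real c * G z)"
    using comp by (auto simp: comp_op_def f'_def fun_eq_iff)
  have "c * H2_norm G = H2_norm (comp_op (\<lambda>z. a * z * \<psi> z + b) f')"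
    unfolding compf' using scale_H2(2)[OF GH, of "complex_of_real c"] c0 by simp
  also have "\<dots> \<le> comp_op_norm (\<lambda>z. a * z * \<psi> z + b)"
    unfolding comp_op_norm_def by (rule cSUP_upper[OF _ bdd]) (use f'H f'n in auto)
  finally have up: "c * H2_norm G \<le> comp_op_norm (\<lambda>z. a * z * \<psi> z + b)" .
  have "(cmod (1/D))^2 / (1 - (cmod e)^2) = 1 / ((cmod D)^2 - (cmod (cnj w * a))^2)"
  proof -
    have Dp: "0 < cmod D" using D0 by simp
    show ?thesis using Dp by (simp add: e_def norm_divide power_divide field_simps)
  qed
  then have Glow': "1 / ((cmod D)^2 - (cmod (cnj w * a))^2) \<le> (H2_norm G)^2" using Glow by simp
  have "sqrt ((1 - (cmod w)^2) / ((cmod D)^2 - (cmod (cnj w * a))^2)) = c * sqrt (1 / ((cmod D)^2 - (cmod (cnj w * a))^2))"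
    by (simp add: c_def real_sqrt_mult[symmetric])
  also have "\<dots> \<le> c * H2_norm G"
  proof (rule mult_left_mono)
    show "sqrt (1 / ((cmod D)^2 - (cmod (cnj w * a))^2)) \<le> H2_norm G"
      using real_sqrt_le_mono[OF Glow'] H2_norm_nonneg[OF GH] by simp
  qed (use c0 in simp)
  finally show ?thesis using up by (simp add: D_def)
qed

lemma lower_t:
  fixes a b :: complex and t :: real
  assumes inner: "inner_function \<psi>" and ab: "norm a + norm b \<le> 1" and b: "norm b < 1" and bnz: "b \<noteq> 0"
    and t: "0 \<le> t" "t < 1"
    and bdd: "bdd_above ((\<lambda>f. H2_norm (comp_op (\<lambda>z. a * z * \<psi> z + b) f)) ` {f \<in> H2. H2_norm f \<le> 1})"
  shows "sqrt ((1 - t^2) / ((1 - t * cmod b)^2 - (t * cmod a)^2)) \<le> comp_op_norm (\<lambda>z. a * z * \<psi> z + b)"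
proof -
  define w where "w = complex_of_real t * b / complex_of_real (cmod b)"
  have bp: "0 < cmod b" using bnz by simp
  have nw: "cmod w = t" using bp t by (simp add: w_def norm_mult norm_divide)
  have cb: "cnj w * b = complex_of_real (t * cmod b)"
  proof -
    have "cnj w * b = complex_of_real t * (cnj b * b) / complex_of_real (cmod b)" by (simp add: w_def)
    also have "cnj b * b = complex_of_real ((cmod b)^2)" by (subst complex_norm_square) (rule mult.commute)
    finally show ?thesis using bp by (simp add: power2_eq_square)
  qed
  have ca: "cmod (cnj w * a) = t * cmod a" using nw t by (simp add: norm_mult)
  have tb: "t * cmod b \<le> 1" using t b by (simp add: mult_le_one)
  have c1: "cmod (1 - cnj w * b) = 1 - t * cmod b"
  proof -
    have "1 - cnj w * b = complex_of_real (1 - t * cmod b)" unfolding cb by simp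
    then show ?thesis using tb by (simp only: norm_of_real) 
  qed
  show ?thesis
    using lower_w[OF inner ab b _ bdd, of w] nw t by (simp add: c1 ca)
qed


theorem proposition2p4:
  fixes \<psi> :: "complex \<Rightarrow> complex" and a b :: complex
  assumes "inner_function \<psi>"
    and "b \<in> unit_disc"
    and "norm a + norm b \<le> 1"
    and "\<phi> = (\<lambda>z. a * z * \<psi> z + b)"
  shows "(\<forall>f \<in> H2. comp_op \<phi> f \<in> H2)
    \<and> bdd_above ((\<lambda>f. H2_norm (comp_op \<phi> f)) ` {f \<in> H2. H2_norm f \<le> 1})
    \<and> comp_op_norm \<phi> =
       sqrt (2 / (1 + (norm a)\<^sup>2 - (norm b)\<^sup>2
              + sqrt ((1 - (norm a)\<^sup>2 + (norm b)\<^sup>2)\<^sup>2 - 4 * (norm b)\<^sup>2)))"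
proof -
  note inner = assms(1) and ab = assms(3) and phi = assms(4)
  have b: "norm b < 1" using assms(2) by simp
  define L where "L = 2 / (1 + (norm a)\<^sup>2 - (norm b)\<^sup>2 + sqrt ((1 - (norm a)\<^sup>2 + (norm b)\<^sup>2)\<^sup>2 - 4 * (norm b)\<^sup>2))"
  have cphi: "comp_op \<phi> f = (\<lambda>z. f (a * z * \<psi> z + b))" for f by (simp add: comp_op_def phi o_def)
  have up1: "comp_op \<phi> f \<in> H2" if "f \<in> H2" for f using upper_phi(1)[OF inner ab b that] by (simp add: cphi)
  have up2: "(H2_norm (comp_op \<phi> f))^2 \<le> L * (H2_norm f)^2" if "f \<in> H2" for f
    using upper_phi(2)[OF inner ab b that] by (simp add: cphi L_def)
  obtain t where t0: "0 < t" and t1: "t \<le> 1" and Lt: "1/(1 - norm b * t) = L"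
    and root: "norm b \<noteq> 0 \<longrightarrow> norm b * t^2 - (1 - (norm a)^2 + (norm b)^2) * t + norm b = 0"
    using choose_t[OF norm_ge_zero norm_ge_zero b ab] unfolding L_def by (elim exE conjE) blast
  have bt: "norm b * t < 1" using mult_left_le[of t "norm b"] b t1 by simp
  have L0: "0 < L"
  proof -
    have "0 < 1/(1 - norm b * t)" using bt by simp
    then show ?thesis using Lt by simp
  qed
  have bound: "H2_norm (comp_op \<phi> f) \<le> sqrt L" if "f \<in> H2" "H2_norm f \<le> 1" for f
  proof -
    have "(H2_norm f)^2 \<le> 1" using that H2_norm_nonneg[OF that(1)] by (simp add: power_le_one)
    then have "L * (H2_norm f)^2 \<le> L * 1" by (rule mult_left_mono) (use L0 in simp)
    then have "(H2_norm (comp_op \<phi> f))^2 \<le> L" using up2[OF that(1)] by simp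
    then show ?thesis using H2_norm_nonneg[OF up1[OF that(1)]] by (simp add: real_le_rsqrt)
  qed
  have bdd: "bdd_above ((\<lambda>f. H2_norm (comp_op \<phi> f)) ` {f \<in> H2. H2_norm f \<le> 1})"
    by (rule bdd_aboveI2[where M="sqrt L"]) (use bound in auto)
  have ne: "{f \<in> H2. H2_norm f \<le> 1} \<noteq> {}" using zero_H2 by auto
  have le: "comp_op_norm \<phi> \<le> sqrt L"
    unfolding comp_op_norm_def by (rule cSUP_least[OF ne]) (use bound in auto)
  have bdd': "bdd_above ((\<lambda>f. H2_norm (comp_op (\<lambda>z. a * z * \<psi> z + b) f)) ` {f \<in> H2. H2_norm f \<le> 1})"
    using bdd by (simp add: phi)
  have ge: "sqrt L \<le> comp_op_norm \<phi>"
  proof (cases "b = 0")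
    case True
    have "L = 1" using Lt True by simp
    moreover have "sqrt ((1 - (cmod 0)^2) / ((cmod (1 - cnj 0 * b))^2 - (cmod (cnj 0 * a))^2)) \<le> comp_op_norm \<phi>"
      using lower_w[OF inner ab b _ bdd', of 0] by (simp add: phi)
    ultimately show ?thesis using True by simp
  next
    case False
    define al where "al = norm a"
    define be where "be = norm b"
    have be0: "0 < be" using False by (simp add: be_def)
    have rt: "be * t^2 - (1 - al^2 + be^2) * t + be = 0" using root False by (simp add: al_def be_def)
    have R: "sqrt ((1 - s^2) / ((1 - s * be)^2 - (s * al)^2)) \<le> comp_op_norm \<phi>" if "0 \<le> s" "s < 1" for s
      using lower_t[OF inner ab b False that bdd'] by (simp add: phi al_def be_def)
    show ?thesis
    proof (cases "t < 1")
      case True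
      have den: "(1 - t * be)^2 - (t * al)^2 = (1 - t * be) * (1 - t^2)"
      proof -
        have d: "(1 - t * be)^2 - (t * al)^2 - (1 - t * be) * (1 - t^2) = - (t * (be * t^2 - (1 - al^2 + be^2) * t + be))"
          by algebra
        have "(1 - t * be)^2 - (t * al)^2 - (1 - t * be) * (1 - t^2) = 0" unfolding d rt by simp
        then show ?thesis by simp
      qed
      have pos: "0 < 1 - t^2" using True t0 by (simp add: power_less_one_iff abs_square_less_1)
      have "(1 - t^2) / ((1 - t * be)^2 - (t * al)^2) = L"
        unfolding den using pos Lt by (simp add: be_def mult.commute)
      then show ?thesis using R[of t] True t0 by simp
    next
      case False
      then have t1': "t = 1" using t1 by simp
      have Q: "al^2 = (1 - be)^2" using rt t1' by (simp add: power2_eq_square algebra_simps)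
      have alb: "al = 1 - be"
        by (rule power2_eq_imp_eq[OF Q]) (use b in \<open>simp_all add: al_def be_def\<close>)
      have al0: "0 < al" using alb b by (simp add: be_def)
      have Lv: "L = 2 / (1 - be + al)"
      proof -
        have e2: "1 - be + al = 2 * al" using alb by simp
        have "L = 1 / al" using Lt t1' alb by (simp add: be_def)
        then show ?thesis unfolding e2 by simp
      qed
      have lim: "((\<lambda>s. sqrt ((1 + s) / (1 - s * be + s * al))) \<longlongrightarrow> sqrt ((1 + 1) / (1 - 1 * be + 1 * al))) (at_left 1)"
        using al0 alb by (intro tendsto_intros) auto
      have ev: "eventually (\<lambda>s. sqrt ((1 + s) / (1 - s * be + s * al)) \<le> comp_op_norm \<phi>) (at_left (1::real))"
      proof (rule eventually_mono[OF eventually_at_left_real[of 0 1]])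
        fix s :: real assume "s \<in> {0<..<1}"
        then have s: "0 < s" "s < 1" by auto
        have den: "(1 - s * be)^2 - (s * al)^2 = (1 - s) * (1 - s * be + s * al)"
          unfolding alb by algebra
        have p1: "0 < 1 - s" using s by simp
        have "(1 - s^2) / ((1 - s * be)^2 - (s * al)^2) = (1 + s) / (1 - s * be + s * al)"
        proof -
          have "1 - s^2 = (1 - s) * (1 + s)" by algebra
          then show ?thesis unfolding den using p1 by simp
        qed
        then show "sqrt ((1 + s) / (1 - s * be + s * al)) \<le> comp_op_norm \<phi>"
          using R[of s] s by simp
      qed simp
      have "sqrt ((1 + 1) / (1 - 1 * be + 1 * al)) \<le> comp_op_norm \<phi>"
        by (rule tendsto_le[OF _ tendsto_const lim ev]) simp
      then show ?thesis using Lv by simp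
    qed
  qed
  show ?thesis using up1 bdd le ge by (simp add: L_def)
qed

end
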